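(* If $G$ is a finite simple graph with chromatic number $\chi(G)=3$, then $\mathrm{Hom}(G,K_3)$ is disconnected.
   Context: $K_3$ is the complete graph on 3 vertices. For graphs $G,H$, the homomorphism complex $\mathrm{Hom}(G,H)$ is the polyhedral complex whose cells are functions $\eta:V(G)\to 2^{V(H)}\setminus\{\varnothing\}$ such that whenever $\{x,y\}\in E(G)$ we have $\eta(x)\times\eta(y)\subseteq E(H)$; the cell $\eta$ is a product of simplices of dimension $\sum_{v}(|\eta(v)|-1)$, with face relation $\eta\subseteq\tau$ iff $\eta(v)\subseteq\tau(v)$ for all $v$. Its 0-cells are the graph homomorphisms $G\to H$. Disconnected means the (geometric realization of the) complex is nonempty and has more than one path component. *)

theory Defs
  imports "HOL-Analysis.Analysis"
begin

definition finite_simple_graph :: "'a set \<Rightarrow> ('a \<Rightarrow> 'a \<Rightarrow> bool) \<Rightarrow> bool" where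
  "finite_simple_graph V E \<longleftrightarrow> finite V \<and>
     (\<forall>x y. E x y \<longrightarrow> x \<in> V \<and> y \<in> V \<and> x \<noteq> y \<and> E y x)"

definition colorable :: "'a set \<Rightarrow> ('a \<Rightarrow> 'a \<Rightarrow> bool) \<Rightarrow> nat \<Rightarrow> bool" where
  "colorable V E k \<longleftrightarrow> (\<exists>c :: 'a \<Rightarrow> nat. (\<forall>v\<in>V. c v < k) \<and>
     (\<forall>x\<in>V. \<forall>y\<in>V. E x y \<longrightarrow> c x \<noteq> c y))"

definition chromatic_number :: "'a set \<Rightarrow> ('a \<Rightarrow> 'a \<Rightarrow> bool) \<Rightarrow> nat" where
  "chromatic_number V E = (LEAST k. colorable V E k)"

definition hom_cell :: "'a set \<Rightarrow> ('a \<Rightarrow> 'a \<Rightarrow> bool) \<Rightarrow> 'b set \<Rightarrow> ('b \<Rightarrow> 'b \<Rightarrow> bool)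
    \<Rightarrow> ('a \<Rightarrow> 'b set) \<Rightarrow> bool" where
  "hom_cell V E W F \<eta> \<longleftrightarrow>
     (\<forall>v\<in>V. \<eta> v \<noteq> {} \<and> \<eta> v \<subseteq> W) \<and>
     (\<forall>x\<in>V. \<forall>y\<in>V. E x y \<longrightarrow> (\<forall>a\<in>\<eta> x. \<forall>b\<in>\<eta> y. F a b))"

text \<open>Geometric realization of Hom(G,H) as the subcomplex of the product of
simplices prod_{v in V(G)} Delta^{V(H)}: a point is f v w (barycentric coordinate
of w in the v-th simplex); it belongs to the closed cell eta with
eta(v) = support of f v, and lies in the complex iff that eta is a cell.
Topology: product topology on functions (= Euclidean topology here, since
all coordinates outside V \<times> W vanish).\<close>
definition hom_realization :: "'a set \<Rightarrow> ('a \<Rightarrow> 'a \<Rightarrow> bool) \<Rightarrow> 'b set \<Rightarrow> ('b \<Rightarrow> 'b \<Rightarrow> bool)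
    \<Rightarrow> ('a \<Rightarrow> 'b \<Rightarrow> real) set" where
  "hom_realization V E W F =
     {f. (\<forall>v w. f v w \<noteq> 0 \<longrightarrow> v \<in> V \<and> w \<in> W) \<and>
         (\<forall>v w. 0 \<le> f v w) \<and>
         (\<forall>v\<in>V. sum (f v) W = 1) \<and>
         hom_cell V E W F (\<lambda>v. {w\<in>W. 0 < f v w})}"

definition K3_V :: "nat set" where "K3_V = {0, 1, 2}"
definition K3_E :: "nat \<Rightarrow> nat \<Rightarrow> bool" where
  "K3_E a b \<longleftrightarrow> a \<in> K3_V \<and> b \<in> K3_V \<and> a \<noteq> b"

definition disconnected_space :: "'c::topological_space set \<Rightarrow> bool" where
  "disconnected_space S \<longleftrightarrow> S \<noteq> {} \<and> \<not> path_connected S"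

end

theory Submission
  imports Defs
begin

definition dl :: "nat \<Rightarrow> nat \<Rightarrow> int" where
  "dl a b = (if b = (a + 1) mod 3 then 1 else -1)"

definition Wd :: "(nat \<Rightarrow> 'a) \<Rightarrow> nat \<Rightarrow> ('a \<Rightarrow> nat) \<Rightarrow> int" where
  "Wd w n h = (\<Sum>i<n. dl (h (w i)) (h (w (Suc i))))"

lemma three_cases: "(a::nat) < 3 \<Longrightarrow> a = 0 \<or> a = 1 \<or> a = 2" by auto

lemma dl_change:
  assumes "a<3" "a'<3" "q<3" "a\<noteq>q" "a'\<noteq>q" "a\<noteq>a'"
  shows "dl a' q - dl a q = 2*dl a a' \<and> dl q a' - dl q a = -2*dl a a'"
  using three_cases[OF assms(1)] three_cases[OF assms(2)] three_cases[OF assms(3)] assms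
  apply -
  apply (elim disjE)
  apply (simp_all add: dl_def)
  done

definition sw :: "nat \<Rightarrow> nat" where
  "sw a = (if a = 1 then 2 else if a = 2 then 1 else a)"

lemma dl_sw: assumes "a<3" "b<3" "a\<noteq>b" shows "dl (sw a) (sw b) = - dl a b"
  using three_cases[OF assms(1)] three_cases[OF assms(2)] assms
  apply -
  apply (elim disjE)
  apply (simp_all add: dl_def sw_def)
  done

lemma dl_odd: "odd (dl a b)"
proof (cases "b = (a + 1) mod 3")
  case True then show ?thesis by (simp add: dl_def)
next
  case False then show ?thesis by (simp add: dl_def)
qed

lemma even_sum: "(\<And>i. odd (f i :: int)) \<Longrightarrow> even (\<Sum>i<n. f i) = even (n::nat)"
proof (induction n)
  case 0 then show ?case by simp
next
  case (Suc n)
  have o: "odd (f n)" by (rule Suc.prems)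
  have ih: "even (\<Sum>i<n. f i) = even n" by (rule Suc.IH[OF Suc.prems])
  have "(\<Sum>i<Suc n. f i) = (\<Sum>i<n. f i) + f n" by (rule sum.lessThan_Suc)
  then have "even (\<Sum>i<Suc n. f i) = (even (\<Sum>i<n. f i) \<longleftrightarrow> even (f n))"
    by (simp only: even_add)
  then show ?case using o ih by (simp only: even_Suc) blast
qed

lemma odd_sum:
  assumes "odd (n::nat)" "\<And>i. odd (f i :: int)" shows "odd (\<Sum>i<n. f i)"
proof -
  have "even (\<Sum>i<n. f i) = even n" using even_sum[of f n, OF assms(2)] .
  then show ?thesis using assms(1) by simp
qed

lemma Wd_odd: "odd n \<Longrightarrow> Wd w n h \<noteq> 0"
proof -
  assume "odd n"
  then have "odd (Wd w n h)" unfolding Wd_def by (rule odd_sum) (rule dl_odd)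
  then show ?thesis by auto
qed

lemma Wd_sw:
  assumes "\<forall>i<n. h (w i) < 3 \<and> h (w (Suc i)) < 3 \<and> h (w i) \<noteq> h (w (Suc i))"
  shows "Wd w n (sw \<circ> h) = - Wd w n h"
  unfolding Wd_def using assms by (simp add: dl_sw sum_negf)

lemma Wd_single:
  assumes P: "\<forall>i<n. \<forall>a\<in>S (w i). \<forall>b\<in>S (w (Suc i)). a \<noteq> b \<and> a < 3 \<and> b < 3"
    and g: "\<forall>i\<le>n. g (w i) \<in> S (w i)"
    and a': "\<forall>i\<le>n. w i = u \<longrightarrow> a' \<in> S u"
    and cl: "w 0 = w n"
  shows "Wd w n (g(u := a')) = Wd w n g"
proof (cases "g u = a'")
  case True
  then show ?thesis by (metis fun_upd_triv)
next
  case False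
  define e where "e = dl (g u) a'"
  define ch where "ch = (\<lambda>i. if w i = u then (1::int) else 0)"
  have tm: "dl ((g(u := a')) (w i)) ((g(u := a')) (w (Suc i)))
      = dl (g (w i)) (g (w (Suc i))) + 2 * e * (ch i - ch (Suc i))" if "i < n" for i
  proof -
    have gi: "g (w i) \<in> S (w i)" and gs: "g (w (Suc i)) \<in> S (w (Suc i))"
      using g that by auto
    have Pi: "\<forall>a\<in>S (w i). \<forall>b\<in>S (w (Suc i)). a \<noteq> b \<and> a < 3 \<and> b < 3" using P that by auto
    have neq: "w i \<noteq> w (Suc i)" using Pi gi gs by metis
    show ?thesis
    proof (cases "w i = u")
      case True
      then have "w (Suc i) \<noteq> u" using neq by auto
      have "i \<le> n" using that by simp
      then have "a' \<in> S (w i)" using a' True by auto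
      then have "dl a' (g (w (Suc i))) - dl (g u) (g (w (Suc i))) = 2 * e"
        using dl_change[of "g u" a' "g (w (Suc i))"] Pi gi gs True False unfolding e_def by metis
      then show ?thesis using True \<open>w (Suc i) \<noteq> u\<close> by (simp add: ch_def)
    next
      case nu: False
      show ?thesis
      proof (cases "w (Suc i) = u")
        case True
        have "Suc i \<le> n" using that by simp
        then have "a' \<in> S (w (Suc i))" using a' True by auto
        then have "dl (g (w i)) a' - dl (g (w i)) (g u) = -2 * e"
          using dl_change[of "g u" a' "g (w i)"] Pi gi gs True False unfolding e_def by metis
        then show ?thesis using True nu by (simp add: ch_def)
      next
        case False
        then show ?thesis using nu by (simp add: ch_def)
      qed
    qed
  qed
  have "Wd w n (g(u := a')) = (\<Sum>i<n. dl (g (w i)) (g (w (Suc i))) + 2 * e * (ch i - ch (Suc i)))"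
    unfolding Wd_def using tm by (rule sum.cong[OF refl]) simp
  also have "\<dots> = Wd w n g + 2 * e * (\<Sum>i<n. ch i - ch (Suc i))"
    by (simp add: Wd_def sum.distrib sum_distrib_left)
  also have "(\<Sum>i<n. ch i - ch (Suc i)) = ch 0 - ch n"
    by (rule sum_lessThan_telescope')
  also have "ch 0 - ch n = 0" by (simp add: ch_def cl)
  finally show ?thesis by (metis add.right_neutral mult_zero_right)
qed

lemma Wd_cell:
  assumes P: "\<forall>i<n. \<forall>a\<in>S (w i). \<forall>b\<in>S (w (Suc i)). a \<noteq> b \<and> a < 3 \<and> b < 3"
    and h: "\<forall>i\<le>n. h (w i) \<in> S (w i)" and h': "\<forall>i\<le>n. h' (w i) \<in> S (w i)"
    and cl: "w 0 = w n"
  shows "Wd w n h' = Wd w n h"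
proof -
  define T where "T = w ` {..n}"
  have main: "F \<subseteq> T \<Longrightarrow> Wd w n (\<lambda>v. if v \<in> F then h' v else h v) = Wd w n h"
    if "finite F" for F
    using that
  proof (induction F rule: finite_induct)
    case empty
    then show ?case by simp
  next
    case (insert u F)
    define g where "g = (\<lambda>v. if v \<in> F then h' v else h v)"
    have eq: "(\<lambda>v. if v \<in> insert u F then h' v else h v) = g(u := h' u)"
      by (auto simp: g_def)
    have g: "\<forall>i\<le>n. g (w i) \<in> S (w i)" using h h' by (simp add: g_def)
    have a': "\<forall>i\<le>n. w i = u \<longrightarrow> h' u \<in> S u" using h' by auto
    have "Wd w n (g(u := h' u)) = Wd w n g"
      by (rule Wd_single[OF P g a' cl])
    then show ?case using insert unfolding eq g_def by simp
  qed
  have "Wd w n (\<lambda>v. if v \<in> T then h' v else h v) = Wd w n h"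
    by (rule main) (auto simp: T_def)
  moreover have "Wd w n (\<lambda>v. if v \<in> T then h' v else h v) = Wd w n h'"
    unfolding Wd_def by (rule sum.cong) (auto simp: T_def)
  ultimately show ?thesis by simp
qed

definition walk :: "('a \<Rightarrow> 'a \<Rightarrow> bool) \<Rightarrow> (nat \<Rightarrow> 'a) \<Rightarrow> nat \<Rightarrow> 'a \<Rightarrow> 'a \<Rightarrow> bool" where
  "walk E w n u v \<longleftrightarrow> w 0 = u \<and> w n = v \<and> (\<forall>i<n. E (w i) (w (Suc i)))"

lemma walk_refl: "walk E (\<lambda>_. u) 0 u u" by (simp add: walk_def)

lemma walk_snoc: "walk E w n u v \<Longrightarrow> E v x \<Longrightarrow> walk E (w(Suc n := x)) (Suc n) u x"
  unfolding walk_def by (auto simp: less_Suc_eq)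

lemma walk_rev:
  assumes sym: "\<And>x y. E x y \<Longrightarrow> E y x" and w: "walk E w n u v"
  shows "walk E (\<lambda>i. w (n - i)) n v u"
  unfolding walk_def
proof (intro conjI allI impI)
  show "w (n - 0) = v" "w (n - n) = u" using w by (auto simp: walk_def)
  fix i assume "i < n"
  then have e: "E (w (n - Suc i)) (w (Suc (n - Suc i)))" using w by (auto simp: walk_def)
  have "Suc (n - Suc i) = n - i" using \<open>i < n\<close> by simp
  then show "E (w (n - i)) (w (n - Suc i))" using sym[OF e] by simp
qed

lemma walk_app:
  assumes w1: "walk E w1 n1 u v" and w2: "walk E w2 n2 v x"
  shows "walk E (\<lambda>i. if i \<le> n1 then w1 i else w2 (i - n1)) (n1 + n2) u x"
  unfolding walk_def
proof (intro conjI allI impI)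
  show "(if 0 \<le> n1 then w1 0 else w2 (0 - n1)) = u" using w1 by (simp add: walk_def)
  show "(if n1 + n2 \<le> n1 then w1 (n1 + n2) else w2 (n1 + n2 - n1)) = x"
    using w1 w2 by (auto simp: walk_def)
  fix i assume i: "i < n1 + n2"
  show "E (if i \<le> n1 then w1 i else w2 (i - n1)) (if Suc i \<le> n1 then w1 (Suc i) else w2 (Suc i - n1))"
  proof (cases "Suc i \<le> n1")
    case True then show ?thesis using w1 by (auto simp: walk_def)
  next
    case False
    show ?thesis
    proof (cases "i = n1")
      case True
      then show ?thesis using w1 w2 i by (auto simp: walk_def)
    next
      case False
      then have "i - n1 < n2" "Suc i - n1 = Suc (i - n1)" "\<not> i \<le> n1" using i \<open>\<not> Suc i \<le> n1\<close> by auto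
      then show ?thesis using w2 \<open>\<not> Suc i \<le> n1\<close> by (auto simp: walk_def)
    qed
  qed
qed

lemma odd_closed_walk:
  assumes fsg: "finite_simple_graph V E" and nc: "\<not> colorable V E 2"
  shows "\<exists>w n u. walk E w n u u \<and> odd n"
proof (rule ccontr)
  assume nn: "\<not> ?thesis"
  have ev: "even n" if "walk E w n u u" for w n u
  proof (rule ccontr)
    assume "\<not> even n"
    then have "walk E w n u u \<and> odd n" using that by simp
    then have "\<exists>w n u. walk E w n u u \<and> odd n" by (intro exI)
    then show False using nn by (rule notE[rotated])
  qed
  have sym: "\<And>x y. E x y \<Longrightarrow> E y x" using fsg by (simp add: finite_simple_graph_def)
  define reach where "reach = (\<lambda>u v. \<exists>w n. walk E w n u v)"
  define rep where "rep = (\<lambda>v. SOME u. reach u v)"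
  define odw where "odw = (\<lambda>v. \<exists>w n. walk E w n (rep v) v \<and> odd n)"
  define c where "c = (\<lambda>v. if odw v then 1 else (0::nat))"
  have reachr: "reach v v" for v unfolding reach_def by (rule exI[of _ "\<lambda>_. v"], rule exI[of _ 0], rule walk_refl)
  have reach_rep: "reach (rep v) v" for v unfolding rep_def by (rule someI[of _ v]) (rule reachr)
  have reach_step: "reach u y" if r1: "reach u x" and r2: "E x y" for u x y
  proof -
    obtain w n where "walk E w n u x" using r1 unfolding reach_def by blast
    then have "walk E (w(Suc n := y)) (Suc n) u y" by (rule walk_snoc) (rule r2)
    then show ?thesis unfolding reach_def by (intro exI)
  qed
  have proper: "c x \<noteq> c y" if e: "E x y" for x y
  proof -
    have "reach u x = reach u y" for u
    proof
      assume "reach u x" then show "reach u y" by (rule reach_step) (rule e)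
    next
      assume "reach u y" then show "reach u x" by (rule reach_step) (rule sym[OF e])
    qed
    then have "(\<lambda>u. reach u x) = (\<lambda>u. reach u y)" by (rule ext)
    then have rxy: "rep x = rep y" unfolding rep_def by simp
    define r where "r = rep x"
    have ry: "rep y = r" using rxy r_def by simp
    have par: "odd (p + q)" if "walk E w1 p r x" "walk E w2 q r y" for w1 w2 p q
    proof -
      have a: "walk E (w1(Suc p := y)) (Suc p) r y" by (rule walk_snoc[OF that(1) e])
      have b: "walk E (\<lambda>i. w2 (q - i)) q y r" by (rule walk_rev[OF sym that(2)])
      have "even (Suc p + q)" by (rule ev[OF walk_app[OF a b]])
      then show ?thesis by simp
    qed
    obtain w0 p0 where w0: "walk E w0 p0 r x" using reach_rep[of x] unfolding reach_def r_def by blast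
    have w0': "walk E (w0(Suc p0 := y)) (Suc p0) r y" by (rule walk_snoc[OF w0 e])
    have ox: "odw x \<longleftrightarrow> (\<exists>w n. walk E w n r x \<and> odd n)" unfolding odw_def r_def ..
    have oy: "odw y \<longleftrightarrow> (\<exists>w n. walk E w n r y \<and> odd n)" unfolding odw_def ry ..
    have cc: "odw x \<noteq> odw y"
    proof
      assume eq: "odw x = odw y"
      show False
      proof (cases "odw x")
        case True
        then obtain w1 p where w1: "walk E w1 p r x" "odd p" using ox by blast
        from True eq obtain w2 q where w2: "walk E w2 q r y" "odd q" using oy by blast
        have "odd (p + q)" by (rule par[OF w1(1) w2(1)])
        then show False using w1(2) w2(2) by simp
      next
        case False
        then have nx: "\<not> (\<exists>w n. walk E w n r x \<and> odd n)" using ox by simp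
        from False eq have ny: "\<not> (\<exists>w n. walk E w n r y \<and> odd n)" using oy by simp
        show False
        proof (cases "odd p0")
          case True then show False using nx w0 by blast
        next
          case False then have "odd (Suc p0)" by simp
          then show False using ny w0' by blast
        qed
      qed
    qed
    then show ?thesis unfolding c_def by simp
  qed
  have "colorable V E 2"
    unfolding colorable_def
  proof (rule exI[of _ c], intro conjI ballI impI)
    fix v show "c v < 2" by (simp add: c_def)
  next
    fix x y assume "E x y" then show "c x \<noteq> c y" by (rule proper)
  qed
  then show False using nc by simp
qed

lemma finite_colorable:
  assumes fsg: "finite_simple_graph V E" shows "colorable V E (card V)"
proof -
  have fin: "finite V" using fsg by (simp add: finite_simple_graph_def)
  obtain f where f: "bij_betw f V {0..<card V}" using ex_bij_betw_finite_nat[OF fin] by blast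
  show ?thesis unfolding colorable_def
  proof (rule exI[of _ f], intro conjI ballI impI)
    fix v assume "v \<in> V" then show "f v < card V" using f by (auto simp: bij_betw_def)
  next
    fix x y assume "x \<in> V" "y \<in> V" "E x y"
    then have "x \<noteq> y" using fsg by (auto simp: finite_simple_graph_def)
    then show "f x \<noteq> f y" using f \<open>x \<in> V\<close> \<open>y \<in> V\<close> by (auto simp: bij_betw_def inj_on_def)
  qed
qed

definition pick :: "('a \<Rightarrow> nat \<Rightarrow> real) \<Rightarrow> 'a \<Rightarrow> nat" where
  "pick f v = (LEAST a. a \<in> K3_V \<and> 0 < f v a)"

definition Sf :: "('a \<Rightarrow> nat \<Rightarrow> real) \<Rightarrow> 'a \<Rightarrow> nat set" where
  "Sf f v = {a \<in> K3_V. 0 < f v a}"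

lemma pick_in:
  assumes "f \<in> hom_realization V E K3_V K3_E" "v \<in> V"
  shows "pick f v \<in> Sf f v"
proof -
  have "Sf f v \<noteq> {}" using assms unfolding hom_realization_def hom_cell_def Sf_def by auto
  then obtain a where "a \<in> K3_V \<and> 0 < f v a" unfolding Sf_def by auto
  then have "pick f v \<in> K3_V \<and> 0 < f v (pick f v)" unfolding pick_def by (rule LeastI)
  then show ?thesis by (simp add: Sf_def)
qed

lemma Sf_proper:
  assumes "f \<in> hom_realization V E K3_V K3_E" "x \<in> V" "y \<in> V" "E x y"
  shows "\<forall>a\<in>Sf f x. \<forall>b\<in>Sf f y. a \<noteq> b \<and> a < 3 \<and> b < 3"
proof (intro ballI)
  fix a b assume a: "a \<in> Sf f x" and b: "b \<in> Sf f y"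
  have hc: "hom_cell V E K3_V K3_E (\<lambda>v. {w \<in> K3_V. 0 < f v w})"
    using assms(1) unfolding hom_realization_def by blast
  then have "\<forall>a\<in>Sf f x. \<forall>b\<in>Sf f y. K3_E a b"
    using assms(2,3,4) unfolding hom_cell_def Sf_def by blast
  then have "K3_E a b" using a b by blast
  then show "a \<noteq> b \<and> a < 3 \<and> b < 3" unfolding K3_E_def K3_V_def by auto
qed

lemma open_pos: "open {g :: 'a \<Rightarrow> nat \<Rightarrow> real. 0 < g v a}"
proof -
  have "continuous_on UNIV (\<lambda>g :: 'a \<Rightarrow> nat \<Rightarrow> real. g v)" by simp
  then have "continuous_on UNIV (\<lambda>g :: 'a \<Rightarrow> nat \<Rightarrow> real. g v a)"
    by (rule continuous_on_product_then_coordinatewise)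
  then show ?thesis by (rule open_Collect_less[OF continuous_on_const])
qed

lemma open_U:
  assumes "finite V"
  shows "open (\<Inter>v\<in>V. \<Inter>a\<in>K3_V. {g :: 'a \<Rightarrow> nat \<Rightarrow> real. 0 < f v a \<longrightarrow> 0 < g v a})"
proof (intro open_INT assms ballI)
  show "finite K3_V" by (simp add: K3_V_def)
  fix v a
  show "open {g :: 'a \<Rightarrow> nat \<Rightarrow> real. 0 < f v a \<longrightarrow> 0 < g v a}"
  proof (cases "0 < f v a")
    case True then show ?thesis using open_pos[of v a] by simp
  next
    case False then show ?thesis by simp
  qed
qed

definition pt :: "'a set \<Rightarrow> ('a \<Rightarrow> nat) \<Rightarrow> 'a \<Rightarrow> nat \<Rightarrow> real" where
  "pt V c = (\<lambda>v a. if v \<in> V \<and> a = c v then 1 else 0)"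

lemma pt_in:
  assumes c3: "\<forall>v\<in>V. c v < 3" and cp: "\<forall>x\<in>V. \<forall>y\<in>V. E x y \<longrightarrow> c x \<noteq> c y"
    and fsg: "finite_simple_graph V E"
  shows "pt V c \<in> hom_realization V E K3_V K3_E"
proof -
  have cK: "c v \<in> K3_V" if "v \<in> V" for v using c3 that by (auto simp: K3_V_def)
  have S: "{w \<in> K3_V. 0 < pt V c v w} = {c v}" if "v \<in> V" for v
    using cK[OF that] that by (auto simp: pt_def)
  have sm: "sum (pt V c v) K3_V = 1" if "v \<in> V" for v
  proof -
    have "sum (pt V c v) K3_V = sum (\<lambda>a. if a = c v then 1 else 0) K3_V"
      using that by (simp add: pt_def)
    also have "\<dots> = 1" using cK[OF that] by (simp add: K3_V_def)
    finally show ?thesis .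
  qed
  show ?thesis unfolding hom_realization_def
  proof (intro CollectI conjI allI impI ballI)
    fix v w assume "pt V c v w \<noteq> 0"
    then show "v \<in> V" "w \<in> K3_V" using cK by (auto simp: pt_def split: if_splits)
  next
    fix v w show "0 \<le> pt V c v w" by (simp add: pt_def)
  next
    fix v assume "v \<in> V" then show "sum (pt V c v) K3_V = 1" by (rule sm)
  next
    show "hom_cell V E K3_V K3_E (\<lambda>v. {w \<in> K3_V. 0 < pt V c v w})"
      unfolding hom_cell_def using S cK cp by (auto simp: K3_E_def)
  qed
qed

lemma pick_pt:
  assumes "\<forall>v\<in>V. c v < 3" "v \<in> V" shows "pick (pt V c) v = c v"
  unfolding pick_def pt_def
  by (rule Least_equality) (use assms in \<open>auto simp: K3_V_def split: if_splits\<close>)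

lemma sw_inj: "a<3 \<Longrightarrow> b<3 \<Longrightarrow> a\<noteq>b \<Longrightarrow> sw a \<noteq> sw b"
  by (auto simp: sw_def)

theorem theorem4p1:
  fixes V :: "'a set" and E :: "'a \<Rightarrow> 'a \<Rightarrow> bool"
  assumes "finite_simple_graph V E"
    and "chromatic_number V E = 3"
  shows "disconnected_space (hom_realization V E K3_V K3_E)"
proof -
  note fsg = assms(1)
  have fin: "finite V" using fsg by (simp add: finite_simple_graph_def)
  have Ev: "E x y \<Longrightarrow> x \<in> V \<and> y \<in> V" for x y using fsg by (simp add: finite_simple_graph_def)
  have ex: "\<exists>k. colorable V E k" using finite_colorable[OF fsg] by blast
  have col3: "colorable V E 3" using LeastI_ex[OF ex] assms(2) by (simp add: chromatic_number_def)
  have nc2: "\<not> colorable V E 2"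
  proof
    assume "colorable V E 2"
    then have "chromatic_number V E \<le> 2" unfolding chromatic_number_def by (rule Least_le)
    then show False using assms(2) by simp
  qed
  obtain w n u where wk: "walk E w n u u" and on: "odd n" using odd_closed_walk[OF fsg nc2] by blast
  have wE: "\<forall>i<n. E (w i) (w (Suc i))" and cl: "w 0 = w n" using wk by (auto simp: walk_def)
  have wV: "w i \<in> V" if "i \<le> n" for i
  proof (cases "i < n")
    case True then show ?thesis using wE Ev by blast
  next
    case False
    then have "i = n" using that by simp
    have "0 < n" using on by (cases n) auto
    then show ?thesis using wE Ev cl \<open>i = n\<close> by metis
  qed
  obtain c :: "'a \<Rightarrow> nat" where c3: "\<forall>v\<in>V. c v < 3" and cp: "\<forall>x\<in>V. \<forall>y\<in>V. E x y \<longrightarrow> c x \<noteq> c y"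
    using col3 unfolding colorable_def by blast
  define R where "R = hom_realization V E K3_V K3_E"
  define I where "I = (\<lambda>f. Wd w n (pick f))"
  have P: "\<forall>i<n. \<forall>a\<in>Sf f (w i). \<forall>b\<in>Sf f (w (Suc i)). a \<noteq> b \<and> a < 3 \<and> b < 3"
    if "f \<in> R" for f
  proof (intro allI impI)
    fix i assume "i < n"
    then show "\<forall>a\<in>Sf f (w i). \<forall>b\<in>Sf f (w (Suc i)). a \<noteq> b \<and> a < 3 \<and> b < 3"
      using Sf_proper[of f V E "w i" "w (Suc i)"] that wE wV[of i] wV[of "Suc i"] unfolding R_def by simp
  qed
  define U where "U = (\<lambda>f :: 'a \<Rightarrow> nat \<Rightarrow> real. (\<Inter>v\<in>V. \<Inter>a\<in>K3_V. {g :: 'a \<Rightarrow> nat \<Rightarrow> real. 0 < f v a \<longrightarrow> 0 < g v a}))"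
  have loc: "I g = I f" if "f \<in> R" "g \<in> R" "g \<in> U f" for f g
  proof -
    have sub: "Sf f v \<subseteq> Sf g v" if "v \<in> V" for v
      using \<open>g \<in> U f\<close> that unfolding U_def Sf_def by auto
    have "Wd w n (pick f) = Wd w n (pick g)"
    proof (rule Wd_cell[OF P[OF \<open>g \<in> R\<close>] _ _ cl])
      show "\<forall>i\<le>n. pick g (w i) \<in> Sf g (w i)" using pick_in[of g] \<open>g \<in> R\<close> wV unfolding R_def by auto
      show "\<forall>i\<le>n. pick f (w i) \<in> Sf g (w i)" using pick_in[of f] \<open>f \<in> R\<close> wV sub unfolding R_def by blast
    qed
    then show ?thesis by (simp add: I_def)
  qed
  have Iz: "I f \<noteq> 0" for f using Wd_odd[OF on] by (simp add: I_def)
  have opn: "openin (top_of_set R) {f \<in> R. Q (I f)}" for Q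
  proof (subst openin_subopen, intro ballI)
    fix f assume f: "f \<in> {f \<in> R. Q (I f)}"
    show "\<exists>T. openin (top_of_set R) T \<and> f \<in> T \<and> T \<subseteq> {f \<in> R. Q (I f)}"
    proof (intro exI conjI)
      show "openin (top_of_set R) (R \<inter> U f)" unfolding U_def by (rule openin_open_Int[OF open_U[OF fin]])
      show "f \<in> R \<inter> U f" using f by (auto simp: U_def)
      show "R \<inter> U f \<subseteq> {f \<in> R. Q (I f)}" using f loc by auto
    qed
  qed
  have Ic: "I (pt V h) = Wd w n h" if "\<forall>v\<in>V. h v < 3" for h
    unfolding I_def Wd_def using pick_pt[OF that] wV by (intro sum.cong) auto
  have sw3: "\<forall>v\<in>V. (sw \<circ> c) v < 3" using c3 by (auto simp: sw_def)
  have swp: "\<forall>x\<in>V. \<forall>y\<in>V. E x y \<longrightarrow> (sw \<circ> c) x \<noteq> (sw \<circ> c) y"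
    using cp c3 sw_inj by (metis comp_apply)
  have p1: "pt V c \<in> R" unfolding R_def by (rule pt_in[OF c3 cp fsg])
  have p2: "pt V (sw \<circ> c) \<in> R" unfolding R_def by (rule pt_in[OF sw3 swp fsg])
  have "Wd w n (sw \<circ> c) = - Wd w n c"
  proof (rule Wd_sw, intro allI impI)
    fix i assume i: "i < n"
    then have "w i \<in> V" "w (Suc i) \<in> V" using wV by auto
    then show "c (w i) < 3 \<and> c (w (Suc i)) < 3 \<and> c (w i) \<noteq> c (w (Suc i))"
      using c3 cp wE i by blast
  qed
  then have opp: "I (pt V (sw \<circ> c)) = - I (pt V c)" using Ic[OF c3] Ic[OF sw3] by (simp add: o_def)
  have "\<not> connected R"
    unfolding connected_openin
  proof (intro notI, elim notE)
    show "\<exists>E1 E2. openin (top_of_set R) E1 \<and> openin (top_of_set R) E2 \<and>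
        R \<subseteq> E1 \<union> E2 \<and> E1 \<inter> E2 = {} \<and> E1 \<noteq> {} \<and> E2 \<noteq> {}"
    proof (intro exI conjI)
      show "openin (top_of_set R) {f \<in> R. 0 < I f}" by (rule opn)
      show "openin (top_of_set R) {f \<in> R. I f < 0}" by (rule opn)
      show "R \<subseteq> {f \<in> R. 0 < I f} \<union> {f \<in> R. I f < 0}" using Iz by (auto simp: neq_iff)
      show "{f \<in> R. 0 < I f} \<inter> {f \<in> R. I f < 0} = {}" by auto
      have "0 < I (pt V c) \<or> 0 < I (pt V (sw \<circ> c))" using opp Iz[of "pt V c"] by linarith
      then show "{f \<in> R. 0 < I f} \<noteq> {}" using p1 p2 by blast
      have "I (pt V c) < 0 \<or> I (pt V (sw \<circ> c)) < 0" using opp Iz[of "pt V c"] by linarith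
      then show "{f \<in> R. I f < 0} \<noteq> {}" using p1 p2 by blast
    qed
  qed
  then have "\<not> path_connected R" using path_connected_imp_connected by blast
  then show ?thesis using p1 unfolding disconnected_space_def R_def by auto
qed

end
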